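(* Let $r\ge1$, let $\mathcal{A}:\mathbb{C}^{m\times n}\to\mathbb{C}^p$ be linear with $\delta_{4r}(\mathcal{A})\le0.04$, let $X_0\in\mathbb{C}^{m\times n}$ be arbitrary, let $\nu\in\mathbb{C}^p$ and $b=\mathcal{A}X_0+\nu$, and let $X_{0,r}$ be a best rank-$r$ approximation of $X_0$ in Frobenius norm. Then $b=\mathcal{A}X_{0,r}+\widetilde{\nu}$ where $$\|\widetilde{\nu}\|_2\le1.02\left[\|X_0-X_{0,r}\|_F+\frac1{\sqrt r}\|X_0-X_{0,r}\|_*\right]+\|\nu\|_2.$$
   Context: $\|\cdot\|_2$ is the Euclidean norm, $\|\cdot\|_F$ the Frobenius norm, $\|\cdot\|_*$ the nuclear norm. $\delta_s(\mathcal{A})$ is the smallest $\delta\ge0$ such that $(1-\delta)\|X\|_F^2\le\|\mathcal{A}X\|_2^2\le(1+\delta)\|X\|_F^2$ for all $X$ with $\mathrm{rank}(X)\le s$. *)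

theory Defs
  imports "Jordan_Normal_Form.Schur_Decomposition" "Jordan_Normal_Form.DL_Rank"
begin

definition mrank :: "complex mat \<Rightarrow> nat" where
  "mrank X = vec_space.rank (dim_row X) X"

definition frob_norm :: "complex mat \<Rightarrow> real" where
  "frob_norm X = sqrt (\<Sum>i<dim_row X. \<Sum>j<dim_col X. (cmod (X $$ (i, j)))\<^sup>2)"

definition vnorm :: "complex vec \<Rightarrow> real" where
  "vnorm v = sqrt (\<Sum>i<dim_vec v. (cmod (v $ i))\<^sup>2)"

definition singular_values :: "complex mat \<Rightarrow> real multiset" where
  "singular_values X = image_mset (\<lambda>z. sqrt (Re z)) (proots (char_poly (mat_adjoint X * X)))"

definition nuclear_norm :: "complex mat \<Rightarrow> real" where
  "nuclear_norm X = sum_mset (singular_values X)"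

definition clinear_op :: "nat \<Rightarrow> nat \<Rightarrow> nat \<Rightarrow> (complex mat \<Rightarrow> complex vec) \<Rightarrow> bool" where
  "clinear_op m n p A \<longleftrightarrow>
     (\<forall>X \<in> carrier_mat m n. A X \<in> carrier_vec p) \<and>
     (\<forall>X \<in> carrier_mat m n. \<forall>Y \<in> carrier_mat m n. A (X + Y) = A X + A Y) \<and>
     (\<forall>c. \<forall>X \<in> carrier_mat m n. A (c \<cdot>\<^sub>m X) = c \<cdot>\<^sub>v A X)"

definition rip_const :: "nat \<Rightarrow> nat \<Rightarrow> (complex mat \<Rightarrow> complex vec) \<Rightarrow> nat \<Rightarrow> real" where
  "rip_const m n A s = Inf {\<delta>. \<delta> \<ge> 0 \<and> (\<forall>X \<in> carrier_mat m n. mrank X \<le> s \<longrightarrow>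
       (1 - \<delta>) * (frob_norm X)\<^sup>2 \<le> (vnorm (A X))\<^sup>2 \<and>
       (vnorm (A X))\<^sup>2 \<le> (1 + \<delta>) * (frob_norm X)\<^sup>2)}"

definition best_rank_approx :: "nat \<Rightarrow> nat \<Rightarrow> nat \<Rightarrow> complex mat \<Rightarrow> complex mat \<Rightarrow> bool" where
  "best_rank_approx m n r X Xr \<longleftrightarrow> Xr \<in> carrier_mat m n \<and> mrank Xr \<le> r \<and>
     (\<forall>Y \<in> carrier_mat m n. mrank Y \<le> r \<longrightarrow> frob_norm (X - Xr) \<le> frob_norm (X - Y))"

end

theory Submission
  imports Defs
begin

lemma adj_dims[simp]: "dim_row (mat_adjoint A) = dim_col A" "dim_col (mat_adjoint A) = dim_row A"
  by (simp_all add: mat_adjoint_def mat_of_rows_def)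

lemma adj_carrier: "A \<in> carrier_mat m n \<Longrightarrow> mat_adjoint A \<in> carrier_mat n m"
  by (metis adj_dims carrier_matD carrier_matI)

lemma adj_index[simp]: "i < dim_col A \<Longrightarrow> j < dim_row A \<Longrightarrow> mat_adjoint (A::complex mat) $$ (i,j) = cnj (A $$ (j,i))"
  by (simp add: mat_adjoint_def mat_of_rows_def)

lemma adj_mult: assumes "(A::complex mat) \<in> carrier_mat m k" "B \<in> carrier_mat k n"
  shows "mat_adjoint (A * B) = mat_adjoint B * mat_adjoint A"
proof (rule eq_matI)
  fix i j assume ij: "i < dim_row (mat_adjoint B * mat_adjoint A)" "j < dim_col (mat_adjoint B * mat_adjoint A)"
  hence i: "i < n" and j: "j < m" using assms by auto
  have "mat_adjoint (A * B) $$ (i,j) = cnj ((A*B) $$ (j,i))" using assms i j by simp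
  also have "\<dots> = cnj (\<Sum>l<k. A $$ (j,l) * B $$ (l,i))"
    using assms i j by (simp add: scalar_prod_def lessThan_atLeast0)
  also have "\<dots> = (\<Sum>l<k. cnj (B $$ (l,i)) * cnj (A $$ (j,l)))"
    by (simp add: mult.commute)
  also have "\<dots> = (mat_adjoint B * mat_adjoint A) $$ (i,j)"
    using assms i j by (simp add: scalar_prod_def lessThan_atLeast0)
  finally show "mat_adjoint (A * B) $$ (i,j) = (mat_adjoint B * mat_adjoint A) $$ (i,j)" .
qed (use assms in simp_all)

lemma adj_adj[simp]: "mat_adjoint (mat_adjoint (A::complex mat)) = A"
  by (rule eq_matI) simp_all

lemma adj_one[simp]: "mat_adjoint (1\<^sub>m n :: complex mat) = 1\<^sub>m n"
  by (rule eq_matI) simp_all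

definition nsq :: "complex vec \<Rightarrow> real" where
  "nsq v = (\<Sum>i<dim_vec v. (cmod (v $ i))\<^sup>2)"

lemma cscalar_self: "v \<bullet>c v = complex_of_real (nsq v)"
  unfolding nsq_def scalar_prod_def
  by (simp add: lessThan_atLeast0 of_real_sum complex_norm_square[symmetric])

lemma nsq_smult: "nsq (complex_of_real a \<cdot>\<^sub>v v) = a\<^sup>2 * nsq v"
  unfolding nsq_def by (simp add: sum_distrib_left power_mult_distrib norm_mult)

lemma nsq_pos: assumes "v \<in> carrier_vec n" "v \<noteq> 0\<^sub>v n" shows "nsq v > 0"
proof -
  have "\<exists>i<n. v $ i \<noteq> 0"
  proof (rule ccontr)
    assume "\<not> ?thesis"
    hence "v = 0\<^sub>v n" using assms(1) by (intro eq_vecI) auto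
    thus False using assms(2) by simp
  qed
  then obtain i where i: "i < n" "v $ i \<noteq> 0" by blast
  have "(cmod (v $ i))\<^sup>2 > 0" using i by simp
  also have "(cmod (v $ i))\<^sup>2 \<le> nsq v" unfolding nsq_def
    by (rule member_le_sum) (use i assms in auto)
  finally show ?thesis .
qed

lemma cscalar_smult: assumes "x \<in> carrier_vec n" "y \<in> carrier_vec n"
  shows "(a \<cdot>\<^sub>v x) \<bullet>c (b \<cdot>\<^sub>v y) = a * cnj b * (x \<bullet>c (y::complex vec))"
  using assms unfolding scalar_prod_def
  by (simp add: sum_distrib_left lessThan_atLeast0 mult.assoc mult.left_commute)


lemma assoc4: assumes "(a::complex mat) \<in> carrier_mat n n" "b \<in> carrier_mat n n" "c \<in> carrier_mat n n" "d \<in> carrier_mat n n"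
  shows "(a * b) * (c * d) = a * (b * c) * d"
proof -
  have "(a * b) * (c * d) = a * (b * (c * d))"
    by (rule assoc_mult_mat[OF assms(1,2) mult_carrier_mat[OF assms(3,4)]])
  also have "b * (c * d) = (b * c) * d" by (rule assoc_mult_mat[symmetric, OF assms(2,3,4)])
  also have "a * ((b * c) * d) = (a * (b * c)) * d"
    by (rule assoc_mult_mat[symmetric, OF assms(1) mult_carrier_mat[OF assms(2,3)] assms(4)])
  finally show ?thesis .
qed

lemma assoc5: assumes "(a::complex mat) \<in> carrier_mat n n" "b \<in> carrier_mat n n" "c \<in> carrier_mat n n" "d \<in> carrier_mat n n" "e \<in> carrier_mat n n"
  shows "a * (b * c * d) * e = (a * b) * c * (d * e)"
proof -
  have bc: "b * c \<in> carrier_mat n n" using assms by simp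
  have "a * (b * c * d) = (a * (b * c)) * d"
    by (rule assoc_mult_mat[symmetric, OF assms(1) bc assms(4)])
  also have "a * (b * c) = (a * b) * c" by (rule assoc_mult_mat[symmetric, OF assms(1,2,3)])
  finally have 1: "a * (b * c * d) = a * b * c * d" .
  have abc: "a * b * c \<in> carrier_mat n n" using assms by simp
  show ?thesis unfolding 1 by (rule assoc_mult_mat[OF abc assms(4,5)])
qed

lemma hermitian_diag:
  fixes A :: "complex mat"
  assumes "A \<in> carrier_mat n n" "mat_adjoint A = A"
  shows "\<exists>P B. P \<in> carrier_mat n n \<and> B \<in> carrier_mat n n \<and> mat_adjoint P * P = 1\<^sub>m n \<and>
     P * mat_adjoint P = 1\<^sub>m n \<and> diagonal_mat B \<and> A = P * B * mat_adjoint P"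
  using assms
proof (induct n arbitrary: A)
  case 0
  then show ?case
    by (intro exI[of _ "1\<^sub>m 0"] exI[of _ A]) (auto simp: diagonal_mat_def)
next
  case (Suc k A)
  let ?n = "Suc k"
  have A: "A \<in> carrier_mat ?n ?n" and herm: "mat_adjoint A = A" using Suc by auto
  from char_poly_factorized[OF A] obtain es where cp: "char_poly A = (\<Prod>a\<leftarrow>es. [:-a,1:])"
    and len: "length es = ?n" by auto
  then obtain e es' where es: "es = e # es'" by (cases es) auto
  have ev: "eigenvalue A e" unfolding eigenvalue_root_char_poly[OF A] cp es by simp
  define v0 where "v0 = find_eigenvector A e"
  from find_eigenvector[OF A ev] have "eigenvector A v0 e" unfolding v0_def .
  hence v0: "v0 \<in> carrier_vec ?n" "v0 \<noteq> 0\<^sub>v ?n" "A *\<^sub>v v0 = e \<cdot>\<^sub>v v0"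
    using A unfolding eigenvector_def by auto
  define nz where "nz w = complex_of_real (1 / sqrt (nsq w)) \<cdot>\<^sub>v w" for w
  have nz_nsq: "nsq (nz w) = 1" if "w \<in> carrier_vec ?n" "w \<noteq> 0\<^sub>v ?n" for w
  proof -
    have "nsq w > 0" by (rule nsq_pos[OF that])
    thus ?thesis unfolding nz_def nsq_smult by (simp add: power_divide)
  qed
  have nz_carrier: "w \<in> carrier_vec ?n \<Longrightarrow> nz w \<in> carrier_vec ?n" for w
    unfolding nz_def by simp
  define v where "v = nz v0"
  have v: "v \<in> carrier_vec ?n" using v0 nz_carrier by (simp add: v_def)
  have vv: "v \<bullet>c v = 1" using nz_nsq[OF v0(1,2)] cscalar_self unfolding v_def by simp
  have vnz: "v \<noteq> 0\<^sub>v ?n"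
  proof
    assume "v = 0\<^sub>v ?n" hence "v \<bullet>c v = 0" by simp
    thus False using vv by simp
  qed
  have Av: "A *\<^sub>v v = e \<cdot>\<^sub>v v"
    unfolding v_def nz_def using v0 A
    by (simp add: mult_mat_vec[OF A v0(1)] smult_smult_assoc mult.commute)
  have nzv: "nz v = v" unfolding nz_def
    using vv cscalar_self[of v] by simp
  interpret cof_vec_space ?n "TYPE(complex)" .
  define b where "b = basis_completion v"
  from basis_completion[OF v vnz, folded b_def]
  have span_b: "span (set b) = carrier_vec ?n" and dist_b: "distinct b"
    and indep: "\<not> lin_dep (set b)" and b: "set b \<subseteq> carrier_vec ?n" and hdb: "hd b = v"
    and len_b: "length b = ?n" by auto
  from hdb len_b obtain vs where bv: "b = v # vs" by (cases b, auto)
  define ws where "ws = gram_schmidt ?n b"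
  from gram_schmidt_result[OF b dist_b indep ws_def]
  have ws: "set ws \<subseteq> carrier_vec ?n" "corthogonal ws" "length ws = ?n"
    by (auto simp: len_b)
  from gram_schmidt_hd[OF v, of vs, folded bv] have hdws: "hd ws = v" unfolding ws_def .
  have wsnz: "ws ! i \<noteq> 0\<^sub>v ?n" if "i < ?n" for i
  proof
    assume "ws ! i = 0\<^sub>v ?n"
    hence "ws ! i \<bullet>c ws ! i = 0" by simp
    thus False using corthogonalD[OF ws(2)] that ws(3) by auto
  qed
  have wsc: "ws ! i \<in> carrier_vec ?n" if "i < ?n" for i using ws that by auto
  define us where "us = map nz ws"
  have us_len: "length us = ?n" unfolding us_def using ws by simp
  have usc: "set us \<subseteq> carrier_vec ?n" unfolding us_def using ws nz_carrier by auto
  have us_nth: "us ! i = nz (ws ! i)" if "i < ?n" for i unfolding us_def using that ws by simp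
  have us_one: "us ! i \<bullet>c us ! i = 1" if "i < ?n" for i
    using us_nth[OF that] nz_nsq[OF wsc[OF that] wsnz[OF that]] cscalar_self by simp
  have us_zero: "us ! i \<bullet>c us ! j = 0" if "i < ?n" "j < ?n" "i \<noteq> j" for i j
  proof -
    have "ws ! i \<bullet>c ws ! j = 0" using corthogonalD[OF ws(2)] that ws(3) by auto
    thus ?thesis unfolding us_nth[OF that(1)] us_nth[OF that(2)] nz_def
      by (subst cscalar_smult[OF wsc[OF that(1)] wsc[OF that(2)]]) simp
  qed
  have us_orth: "corthogonal us"
    by (rule corthogonalI) (use us_one us_zero us_len in auto)
  have hdus: "hd us = v" unfolding us_def using hdws ws(3) nzv
    by (cases ws) auto
  define W where "W = mat_of_cols ?n us"
  have W: "W \<in> carrier_mat ?n ?n" unfolding W_def using us_len mat_of_cols_carrier(1)[of ?n us] by simp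
  have W'eq: "corthogonal_inv W = mat_adjoint W"
  proof -
    have mv: "map vec_inv us = map conjugate us"
    proof (rule map_cong[OF refl])
      fix u assume "u \<in> set us"
      then obtain i where i: "i < ?n" "u = us ! i" using us_len by (metis in_set_conv_nth)
      show "vec_inv u = conjugate u" unfolding vec_inv_def i(2) us_one[OF i(1)] by simp
    qed
    show ?thesis
      by (simp only: corthogonal_inv_def mat_adjoint_def W_def cols_mat_of_cols[OF usc]
          mat_of_cols_carrier(2) mv)
  qed
  have orth_W: "corthogonal_mat W" unfolding W_def
    by (rule orthogonal_mat_of_cols[OF usc us_orth us_len])
  from corthogonal_inv_result[OF orth_W]
  have WhW: "mat_adjoint W * W = 1\<^sub>m ?n" unfolding W'eq inverts_mat_def using W by simp
  have WWh: "W * mat_adjoint W = 1\<^sub>m ?n"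
    by (rule mat_mult_left_right_inverse[OF adj_carrier[OF W] W WhW])
  define A' where "A' = mat_adjoint W * A * W"
  have A': "A' \<in> carrier_mat ?n ?n" unfolding A'_def using W A adj_carrier[OF W] by auto
  have col0: "col A' 0 = vec ?n (\<lambda> i. if i = 0 then e else 0)"
    using corthogonal_col_ev_0[OF A v vnz Av _ hdus usc us_orth us_len]
    unfolding A'_def W'eq[unfolded W_def] W_def by simp
  have WhA: "mat_adjoint W * A \<in> carrier_mat ?n ?n" using W A adj_carrier[OF W] by auto
  have "mat_adjoint A' = mat_adjoint W * mat_adjoint (mat_adjoint W * A)"
    unfolding A'_def by (rule adj_mult[OF WhA W])
  also have "\<dots> = mat_adjoint W * (A * W)"
    by (subst adj_mult[OF adj_carrier[OF W] A]) (simp add: herm)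
  also have "\<dots> = A'" unfolding A'_def using W A adj_carrier[OF W] by simp
  finally have hermA': "mat_adjoint A' = A'" .
  obtain A1 A2 A0 A3 where splitA': "split_block A' 1 1 = (A1,A2,A0,A3)"
    by (cases "split_block A' 1 1", auto)
  from A' have "dim_row A' = 1 + k" "dim_col A' = 1 + k" by auto
  from split_block[OF splitA' this] have A1c: "A1 \<in> carrier_mat 1 1" and A2c: "A2 \<in> carrier_mat 1 k"
    and A0c: "A0 \<in> carrier_mat k 1" and A3c: "A3 \<in> carrier_mat k k"
    and A'block: "A' = four_block_mat A1 A2 A0 A3" by auto
  have A3id: "A3 = mat k k (\<lambda>(i,j). A' $$ (i+1,j+1))"
    using splitA'[unfolded split_block_def Let_def] A' by auto
  have A1id: "A1 = mat 1 1 (\<lambda> _. e)"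
    using splitA'[unfolded split_block_def Let_def] arg_cong[OF col0, of "\<lambda> v. v $ 0"] A'
    by (auto simp: col_def)
  have A'0: "A' $$ (Suc i, 0) = 0" if "i < k" for i
    using arg_cong[OF col0, of "\<lambda> v. v $ Suc i"] A' that by auto
  have A0id: "A0 = 0\<^sub>m k 1"
    using splitA'[unfolded split_block_def Let_def] A'0 A' by auto
  have A'0': "A' $$ (0, Suc i) = 0" if "i < k" for i
  proof -
    have "A' $$ (0, Suc i) = mat_adjoint A' $$ (0, Suc i)" using hermA' by simp
    also have "\<dots> = cnj (A' $$ (Suc i, 0))" using A' that by simp
    finally show ?thesis using A'0[OF that] by simp
  qed
  have A2id: "A2 = 0\<^sub>m 1 k"
    using splitA'[unfolded split_block_def Let_def] A'0' A' by auto
  have herm3: "mat_adjoint A3 = A3"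
  proof (rule eq_matI)
    fix i j assume "i < dim_row A3" "j < dim_col A3"
    hence ij: "i < k" "j < k" using A3c by auto
    have "mat_adjoint A3 $$ (i,j) = cnj (A' $$ (Suc j, Suc i))" using ij A3c by (simp add: A3id)
    also have "\<dots> = mat_adjoint A' $$ (Suc i, Suc j)" using ij A' by simp
    also have "\<dots> = A3 $$ (i,j)" using ij by (simp add: hermA' A3id)
    finally show "mat_adjoint A3 $$ (i,j) = A3 $$ (i,j)" .
  qed (use A3c in auto)
  from Suc(1)[OF A3c herm3] obtain P' B' where P'c: "P' \<in> carrier_mat k k" and B'c: "B' \<in> carrier_mat k k"
    and P'hP': "mat_adjoint P' * P' = 1\<^sub>m k" and P'P'h: "P' * mat_adjoint P' = 1\<^sub>m k"
    and diagB': "diagonal_mat B'" and A3eq: "A3 = P' * B' * mat_adjoint P'" by blast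
  define Pb where "Pb = four_block_mat (1\<^sub>m 1) (0\<^sub>m 1 k) (0\<^sub>m k 1) P'"
  define B where "B = four_block_mat A1 (0\<^sub>m 1 k) (0\<^sub>m k 1) B'"
  define P where "P = W * Pb"
  have Pbc: "Pb \<in> carrier_mat ?n ?n" unfolding Pb_def using P'c by auto
  have Bc: "B \<in> carrier_mat ?n ?n" unfolding B_def using B'c A1c by auto
  have Pc: "P \<in> carrier_mat ?n ?n" unfolding P_def using Pbc W by auto
  have adjPb: "mat_adjoint Pb = four_block_mat (1\<^sub>m 1) (0\<^sub>m 1 k) (0\<^sub>m k 1) (mat_adjoint P')"
    by (rule eq_matI) (use P'c in \<open>auto simp: Pb_def\<close>)
  have PbhPb: "mat_adjoint Pb * Pb = 1\<^sub>m ?n"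
    unfolding adjPb unfolding Pb_def
    by (subst mult_four_block_mat) (use P'c P'hP' in auto)
  have A'eq: "A' = Pb * B * mat_adjoint Pb"
    unfolding adjPb unfolding Pb_def B_def
    apply (subst mult_four_block_mat)
    apply (use P'c A1c B'c in auto)[8]
    apply (subst mult_four_block_mat)
    apply (use P'c A1c B'c in auto)[8]
    using P'c A1c B'c A'block A0id A2id A3eq
    by (simp add: left_add_zero_mat[OF mult_carrier_mat[OF mult_carrier_mat[OF P'c B'c] adj_carrier[OF P'c]]])
  have Aeq: "A = W * A' * mat_adjoint W"
  proof -
    define X where "X = mat_adjoint W * A"
    have X: "X \<in> carrier_mat ?n ?n" unfolding X_def using WhA .
    have "W * A' * mat_adjoint W = (W * X) * W * mat_adjoint W"
      unfolding A'_def X_def[symmetric] using W X by simp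
    also have "\<dots> = (W * X) * (W * mat_adjoint W)"
      by (rule assoc_mult_mat[OF mult_carrier_mat[OF W X] W adj_carrier[OF W]])
    also have "\<dots> = W * X" unfolding WWh using W X by simp
    also have "\<dots> = (W * mat_adjoint W) * A" unfolding X_def
      by (rule assoc_mult_mat[symmetric, OF W adj_carrier[OF W] A])
    also have "\<dots> = A" unfolding WWh using A by simp
    finally show ?thesis by simp
  qed
  have adjP: "mat_adjoint P = mat_adjoint Pb * mat_adjoint W"
    unfolding P_def by (rule adj_mult[OF W Pbc])
  have "mat_adjoint P * P = mat_adjoint Pb * (mat_adjoint W * W) * Pb"
    unfolding adjP unfolding P_def by (rule assoc4[OF adj_carrier[OF Pbc] adj_carrier[OF W] W Pbc])
  hence PhP: "mat_adjoint P * P = 1\<^sub>m ?n" unfolding WhW using Pbc PbhPb by simp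
  have PPh: "P * mat_adjoint P = 1\<^sub>m ?n"
    by (rule mat_mult_left_right_inverse[OF adj_carrier[OF Pc] Pc PhP])
  have diagB: "diagonal_mat B"
    unfolding diagonal_mat_def
  proof (intro allI impI)
    fix i j assume ij: "i < dim_row B" "j < dim_col B" "i \<noteq> j"
    hence "i < 1 + k" "j < 1 + k" using Bc by auto
    thus "B $$ (i,j) = 0" unfolding B_def using ij A1c B'c diagB'[unfolded diagonal_mat_def]
      by (auto simp: B_def)
  qed
  have "A = W * (Pb * B * mat_adjoint Pb) * mat_adjoint W" using Aeq A'eq by simp
  also have "\<dots> = P * B * mat_adjoint P"
    unfolding adjP unfolding P_def by (rule assoc5[OF W Pbc Bc adj_carrier[OF Pbc] adj_carrier[OF W]])
  finally have "A = P * B * mat_adjoint P" .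
  with Pc Bc PhP PPh diagB show ?case by blast
qed

lemma cauchy_schwarz_sum:
  fixes a b :: "'i \<Rightarrow> real"
  shows "(\<Sum>i\<in>I. a i * b i)\<^sup>2 \<le> (\<Sum>i\<in>I. (a i)\<^sup>2) * (\<Sum>i\<in>I. (b i)\<^sup>2)"
proof -
  have "0 \<le> (\<Sum>i\<in>I. \<Sum>j\<in>I. (a i * b j - a j * b i)\<^sup>2)"
    by (intro sum_nonneg) simp
  also have "\<dots> = (\<Sum>i\<in>I. \<Sum>j\<in>I. (a i)\<^sup>2 * (b j)\<^sup>2) + (\<Sum>i\<in>I. \<Sum>j\<in>I. (a j)\<^sup>2 * (b i)\<^sup>2)
      - 2 * (\<Sum>i\<in>I. \<Sum>j\<in>I. (a i * b i) * (a j * b j))"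
    by (simp add: power2_eq_square algebra_simps sum.distrib sum_subtractf sum_distrib_left)
  also have "(\<Sum>i\<in>I. \<Sum>j\<in>I. (a j)\<^sup>2 * (b i)\<^sup>2) = (\<Sum>i\<in>I. \<Sum>j\<in>I. (a i)\<^sup>2 * (b j)\<^sup>2)"
    by (rule sum.swap)
  also have "(\<Sum>i\<in>I. \<Sum>j\<in>I. (a i)\<^sup>2 * (b j)\<^sup>2) = (\<Sum>i\<in>I. (a i)\<^sup>2) * (\<Sum>i\<in>I. (b i)\<^sup>2)"
    by (simp add: sum_product)
  also have "(\<Sum>i\<in>I. \<Sum>j\<in>I. (a i * b i) * (a j * b j)) = (\<Sum>i\<in>I. a i * b i)\<^sup>2"
    by (simp add: sum_product power2_eq_square)
  finally show ?thesis by simp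
qed

lemma vnorm_triangle:
  assumes "u \<in> carrier_vec p" "v \<in> carrier_vec p"
  shows "vnorm (u + v) \<le> vnorm u + vnorm v"
proof -
  let ?a = "\<lambda>i. cmod (u $ i)" and ?b = "\<lambda>i. cmod (v $ i)"
  have "(vnorm (u + v))\<^sup>2 = (\<Sum>i<p. (cmod (u $ i + v $ i))\<^sup>2)"
    using assms unfolding vnorm_def by (simp add: sum_nonneg)
  also have "\<dots> \<le> (\<Sum>i<p. (?a i + ?b i)\<^sup>2)"
    by (intro sum_mono power_mono norm_triangle_ineq) simp
  also have "\<dots> = (\<Sum>i<p. (?a i)\<^sup>2) + 2 * (\<Sum>i<p. ?a i * ?b i) + (\<Sum>i<p. (?b i)\<^sup>2)"
    by (simp add: power2_eq_square algebra_simps sum.distrib sum_distrib_left)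
  also have "(\<Sum>i<p. ?a i * ?b i) \<le> sqrt (\<Sum>i<p. (?a i)\<^sup>2) * sqrt (\<Sum>i<p. (?b i)\<^sup>2)"
  proof -
    have "(\<Sum>i<p. ?a i * ?b i)\<^sup>2 \<le> (sqrt (\<Sum>i<p. (?a i)\<^sup>2) * sqrt (\<Sum>i<p. (?b i)\<^sup>2))\<^sup>2"
      using cauchy_schwarz_sum[of ?a ?b "{..<p}"] by (simp add: power_mult_distrib sum_nonneg)
    thus ?thesis by (rule power2_le_imp_le) (simp add: sum_nonneg)
  qed
  finally have "(vnorm (u + v))\<^sup>2 \<le> (vnorm u + vnorm v)\<^sup>2"
    using assms unfolding vnorm_def by (simp add: power2_sum sum_nonneg)
  thus ?thesis by (rule power2_le_imp_le) (auto simp: vnorm_def intro!: add_nonneg_nonneg sum_nonneg)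
qed


definition msum :: "nat \<Rightarrow> nat \<Rightarrow> ('i \<Rightarrow> complex mat) \<Rightarrow> 'i set \<Rightarrow> complex mat" where
  "msum m n F S = mat m n (\<lambda>(a,b). \<Sum>s\<in>S. F s $$ (a,b))"

lemma msum_carrier[simp]: "msum m n F S \<in> carrier_mat m n"
  unfolding msum_def by simp

lemma msum_dim[simp]: "dim_row (msum m n F S) = m" "dim_col (msum m n F S) = n"
  unfolding msum_def by simp_all

lemma msum_empty: "msum m n F {} = 0\<^sub>m m n"
  unfolding msum_def by (rule eq_matI) auto

lemma msum_insert: assumes "finite S" "x \<notin> S" "F x \<in> carrier_mat m n"
  shows "msum m n F (insert x S) = F x + msum m n F S"
  unfolding msum_def by (rule eq_matI) (use assms in auto)

lemma vnorm_zero[simp]: "vnorm (0\<^sub>v p) = 0"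
  unfolding vnorm_def by simp

lemma vnorm_nonneg: "vnorm v \<ge> 0"
  unfolding vnorm_def by (auto intro: sum_nonneg)

lemma vnorm_smult: "vnorm (c \<cdot>\<^sub>v v) = cmod c * vnorm v"
  unfolding vnorm_def by (simp add: norm_mult power_mult_distrib sum_distrib_left[symmetric] real_sqrt_mult)

lemma clinear_zero: assumes "clinear_op m n p A" shows "A (0\<^sub>m m n) = 0\<^sub>v p"
proof -
  have 0: "0\<^sub>m m n \<in> carrier_mat m n" by simp
  have "A (0 \<cdot>\<^sub>m 0\<^sub>m m n) = 0 \<cdot>\<^sub>v A (0\<^sub>m m n)" using assms 0 unfolding clinear_op_def by blast
  moreover have "0 \<cdot>\<^sub>m 0\<^sub>m m n = (0\<^sub>m m n :: complex mat)" by (rule eq_matI) auto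
  moreover have "A (0\<^sub>m m n) \<in> carrier_vec p" using assms 0 unfolding clinear_op_def by blast
  ultimately show ?thesis by (metis carrier_vecD eq_vecI index_smult_vec(1,2) index_zero_vec mult_zero_left)
qed

lemma clinear_msum_bound:
  assumes lin: "clinear_op m n p A" and fin: "finite S" and F: "\<And>s. s \<in> S \<Longrightarrow> F s \<in> carrier_mat m n"
  shows "vnorm (A (msum m n F S)) \<le> (\<Sum>s\<in>S. vnorm (A (F s)))"
  using fin F
proof (induct S rule: finite_induct)
  case empty
  then show ?case using clinear_zero[OF lin] by (simp add: msum_empty)
next
  case (insert x S)
  have Fx: "F x \<in> carrier_mat m n" using insert by simp
  have "A (msum m n F (insert x S)) = A (F x) + A (msum m n F S)"
    unfolding msum_insert[where F=F and m=m and n=n, OF insert(1,2) Fx] using lin Fx unfolding clinear_op_def by simp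
  hence "vnorm (A (msum m n F (insert x S))) \<le> vnorm (A (F x)) + vnorm (A (msum m n F S))"
    using vnorm_triangle lin Fx unfolding clinear_op_def by (metis msum_carrier)
  also have "\<dots> \<le> vnorm (A (F x)) + (\<Sum>s\<in>S. vnorm (A (F s)))" using insert by simp
  finally show ?case using insert by simp
qed

lemma clinear_smult: assumes "clinear_op m n p A" "X \<in> carrier_mat m n"
  shows "vnorm (A (c \<cdot>\<^sub>m X)) = cmod c * vnorm (A X)"
  using assms unfolding clinear_op_def by (simp add: vnorm_smult)

lemma frob_entry: assumes "X \<in> carrier_mat m n" "a < m" "b < n"
  shows "cmod (X $$ (a,b)) \<le> frob_norm X"
proof -
  have "(cmod (X $$ (a,b)))\<^sup>2 \<le> (\<Sum>j<n. (cmod (X $$ (a, j)))\<^sup>2)"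
    by (rule member_le_sum[of b "{..<n}" "\<lambda>j. (cmod (X $$ (a, j)))\<^sup>2"]) (use assms in auto)
  also have "\<dots> \<le> (\<Sum>i<m. \<Sum>j<n. (cmod (X $$ (i, j)))\<^sup>2)"
    by (rule member_le_sum[of a "{..<m}" "\<lambda>i. \<Sum>j<n. (cmod (X $$ (i, j)))\<^sup>2"]) (use assms in \<open>auto intro: sum_nonneg\<close>)
  finally have "cmod (X $$ (a,b)) \<le> sqrt (\<Sum>i<m. \<Sum>j<n. (cmod (X $$ (i, j)))\<^sup>2)"
    using real_le_rsqrt by blast
  thus ?thesis using assms unfolding frob_norm_def by simp
qed

lemma frob_nonneg: "frob_norm X \<ge> 0"
  unfolding frob_norm_def by (auto intro!: sum_nonneg)

lemma clinear_bounded: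
  assumes lin: "clinear_op m n p A"
  shows "\<exists>K. \<forall>X\<in>carrier_mat m n. (vnorm (A X))\<^sup>2 \<le> K * (frob_norm X)\<^sup>2"
proof -
  define I where "I = {..<m} \<times> {..<n}"
  define E where "E x = mat m n (\<lambda>y. if y = x then 1 else 0 :: complex)" for x
  define K where "K = (\<Sum>x\<in>I. vnorm (A (E x)))"
  have Ec: "E x \<in> carrier_mat m n" for x unfolding E_def by simp
  have finI: "finite I" unfolding I_def by simp
  show ?thesis
  proof (intro exI[of _ "K\<^sup>2"] ballI)
    fix X :: "complex mat" assume X: "X \<in> carrier_mat m n"
    define F where "F x = X $$ x \<cdot>\<^sub>m E x" for x
    have Fc: "F x \<in> carrier_mat m n" for x unfolding F_def using Ec by simp
    have XF: "X = msum m n F I"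
    proof (rule eq_matI)
      fix i j assume ij: "i < dim_row (msum m n F I)" "j < dim_col (msum m n F I)"
      hence ij': "i < m" "j < n" by auto
      have "msum m n F I $$ (i,j) = (\<Sum>x\<in>I. X $$ x * (if (i,j) = x then 1 else 0))"
        unfolding msum_def F_def E_def using ij' by (auto intro!: sum.cong)
      also have "\<dots> = (\<Sum>x\<in>I. if (i,j) = x then X $$ x else 0)" by (rule sum.cong) auto
      also have "\<dots> = X $$ (i,j)" using ij' finI by (subst sum.delta') (auto simp: I_def)
      finally show "X $$ (i,j) = msum m n F I $$ (i,j)" by simp
    qed (use X in auto)
    have "vnorm (A X) \<le> (\<Sum>x\<in>I. vnorm (A (F x)))"
      using clinear_msum_bound[OF lin finI Fc] XF by simp
    also have "\<dots> \<le> (\<Sum>x\<in>I. frob_norm X * vnorm (A (E x)))"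
    proof (rule sum_mono)
      fix x assume x: "x \<in> I"
      have "vnorm (A (F x)) = cmod (X $$ x) * vnorm (A (E x))"
        unfolding F_def by (rule clinear_smult[OF lin Ec])
      also have "\<dots> \<le> frob_norm X * vnorm (A (E x))"
        using frob_entry[OF X, of "fst x" "snd x"] x vnorm_nonneg unfolding I_def
        by (cases x) (auto intro: mult_right_mono)
      finally show "vnorm (A (F x)) \<le> frob_norm X * vnorm (A (E x))" .
    qed
    also have "\<dots> = frob_norm X * K" unfolding K_def by (simp add: sum_distrib_left)
    finally have "vnorm (A X) \<le> frob_norm X * K" .
    hence "(vnorm (A X))\<^sup>2 \<le> (frob_norm X * K)\<^sup>2"
      using vnorm_nonneg by (intro power_mono) auto
    thus "(vnorm (A X))\<^sup>2 \<le> K\<^sup>2 * (frob_norm X)\<^sup>2" by (simp add: power_mult_distrib mult.commute)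
  qed
qed

lemma rip_get:
  assumes lin: "clinear_op m n p A" and rc: "rip_const m n A s \<le> 0.04"
  shows "\<forall>X\<in>carrier_mat m n. mrank X \<le> s \<longrightarrow> vnorm (A X) \<le> 1.02 * frob_norm X"
proof -
  define D where "D = {\<delta>. \<delta> \<ge> 0 \<and> (\<forall>X \<in> carrier_mat m n. mrank X \<le> s \<longrightarrow>
       (1 - \<delta>) * (frob_norm X)\<^sup>2 \<le> (vnorm (A X))\<^sup>2 \<and>
       (vnorm (A X))\<^sup>2 \<le> (1 + \<delta>) * (frob_norm X)\<^sup>2)}"
  obtain K where K: "\<forall>X\<in>carrier_mat m n. (vnorm (A X))\<^sup>2 \<le> K * (frob_norm X)\<^sup>2"
    using clinear_bounded[OF lin] by blast
  have "\<bar>K\<bar> + 1 \<in> D" unfolding D_def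
  proof (intro CollectI conjI ballI impI)
    fix X :: "complex mat" assume X: "X \<in> carrier_mat m n"
    have "(1 - (\<bar>K\<bar> + 1)) * (frob_norm X)\<^sup>2 \<le> 0" by (simp add: mult_nonpos_nonneg)
    thus "(1 - (\<bar>K\<bar> + 1)) * (frob_norm X)\<^sup>2 \<le> (vnorm (A X))\<^sup>2" by (smt (verit) zero_le_power2)
    have "K * (frob_norm X)\<^sup>2 \<le> (1 + (\<bar>K\<bar> + 1)) * (frob_norm X)\<^sup>2"
      by (intro mult_right_mono) auto
    thus "(vnorm (A X))\<^sup>2 \<le> (1 + (\<bar>K\<bar> + 1)) * (frob_norm X)\<^sup>2" using K X by force
  qed simp
  hence ne: "D \<noteq> {}" by blast
  have "Inf D < 0.0404" using rc unfolding rip_const_def D_def[symmetric] by simp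
  then obtain \<delta> where d: "\<delta> \<in> D" "\<delta> < 0.0404" using cInf_lessD[OF ne] by blast
  show ?thesis
  proof (intro ballI impI)
    fix X :: "complex mat" assume X: "X \<in> carrier_mat m n" and rk: "mrank X \<le> s"
    have "(vnorm (A X))\<^sup>2 \<le> (1 + \<delta>) * (frob_norm X)\<^sup>2" using d X rk unfolding D_def by blast
    also have "\<dots> \<le> 1.0404 * (frob_norm X)\<^sup>2" using d(2)
      by (intro mult_right_mono) auto
    also have "\<dots> = (1.02 * frob_norm X)\<^sup>2" by (simp add: power2_eq_square field_simps)
    finally show "vnorm (A X) \<le> 1.02 * frob_norm X"
      by (rule power2_le_imp_le) (simp add: frob_nonneg)
  qed
qed

definition osum :: "nat \<Rightarrow> nat \<Rightarrow> complex mat \<Rightarrow> complex mat \<Rightarrow> nat set \<Rightarrow> complex mat" where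
  "osum m n Q P S = mat m n (\<lambda>(a,b). \<Sum>i\<in>S. Q $$ (a,i) * cnj (P $$ (b,i)))"

lemma osum_carrier[simp]: "osum m n Q P S \<in> carrier_mat m n"
  unfolding osum_def by simp

lemma osum_dim[simp]: "dim_row (osum m n Q P S) = m" "dim_col (osum m n Q P S) = n"
  unfolding osum_def by simp_all

lemma osum_rank: assumes "finite S" shows "mrank (osum m n Q P S) \<le> card S"
  using assms
proof (induct S rule: finite_induct)
  case empty
  interpret vec_space "TYPE(complex)" m .
  have "osum m n Q P {} = 0\<^sub>m m n" unfolding osum_def by (rule eq_matI) auto
  then show ?case unfolding mrank_def using rank_0I by simp
next
  case (insert x S)
  interpret vec_space "TYPE(complex)" m .
  have split: "osum m n Q P (insert x S) = osum m n Q P {x} + osum m n Q P S"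
    unfolding osum_def by (rule eq_matI) (use insert in auto)
  have r1: "rank (osum m n Q P {x}) \<le> 1"
    by (rule rank_le_1_product_entries[where f="\<lambda>a. Q $$ (a,x)" and g="\<lambda>b. cnj (P $$ (b,x))"])
      (auto simp: osum_def)
  have "rank (osum m n Q P (insert x S)) \<le> rank (osum m n Q P {x}) + rank (osum m n Q P S)"
    unfolding split by (rule rank_subadditive) auto
  also have "\<dots> \<le> 1 + card S" using r1 insert(3) unfolding mrank_def by simp
  finally show ?case unfolding mrank_def using insert by simp
qed

lemma osum_union: assumes "finite J" "\<And>j. j \<in> J \<Longrightarrow> finite (S j)"
  "\<And>j k. j \<in> J \<Longrightarrow> k \<in> J \<Longrightarrow> j \<noteq> k \<Longrightarrow> S j \<inter> S k = {}"
  shows "osum m n Q P (\<Union>j\<in>J. S j) = msum m n (\<lambda>j. osum m n Q P (S j)) J"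
  unfolding osum_def msum_def
  by (rule eq_matI) (use assms in \<open>auto simp: sum.UNION_disjoint\<close>)

lemma osum_self: assumes E: "E \<in> carrier_mat m n" and P: "P \<in> carrier_mat n n"
  and PP: "P * mat_adjoint P = 1\<^sub>m n"
  shows "E = osum m n (E * P) P {..<n}"
proof -
  have "E = E * (P * mat_adjoint P)" using PP E by simp
  also have "\<dots> = (E * P) * mat_adjoint P" by (rule assoc_mult_mat[symmetric, OF E P adj_carrier[OF P]])
  also have "\<dots> = osum m n (E * P) P {..<n}"
    unfolding osum_def
    by (rule eq_matI) (use E P in \<open>auto simp: scalar_prod_def lessThan_atLeast0\<close>)
  finally show ?thesis .
qed

lemma osum_frob:
  assumes Q: "Q \<in> carrier_mat m N" and P: "P \<in> carrier_mat n N"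
  and PP: "mat_adjoint P * P = 1\<^sub>m N" and S: "S \<subseteq> {..<N}"
  shows "(frob_norm (osum m n Q P S))\<^sup>2 = (\<Sum>i\<in>S. nsq (col Q i))"
proof -
  have finS: "finite S" using S finite_subset by blast
  have orth: "(\<Sum>b<n. cnj (P $$ (b,i)) * P $$ (b,j)) = (if i = j then 1 else 0)"
    if "i < N" "j < N" for i j
  proof -
    have "(mat_adjoint P * P) $$ (i,j) = (\<Sum>b<n. cnj (P $$ (b,i)) * P $$ (b,j))"
      using P that by (simp add: scalar_prod_def lessThan_atLeast0)
    thus ?thesis using PP that by simp
  qed
  have row: "(\<Sum>b<n. (cmod (\<Sum>i\<in>S. Q $$ (a,i) * cnj (P $$ (b,i))))\<^sup>2) = (\<Sum>i\<in>S. (cmod (Q $$ (a,i)))\<^sup>2)"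
    for a
  proof -
    have "complex_of_real (\<Sum>b<n. (cmod (\<Sum>i\<in>S. Q $$ (a,i) * cnj (P $$ (b,i))))\<^sup>2)
        = (\<Sum>b<n. (\<Sum>i\<in>S. Q $$ (a,i) * cnj (P $$ (b,i))) * cnj (\<Sum>j\<in>S. Q $$ (a,j) * cnj (P $$ (b,j))))"
      by (simp only: of_real_sum complex_norm_square)
    also have "\<dots> = (\<Sum>b<n. \<Sum>i\<in>S. \<Sum>j\<in>S. Q $$ (a,i) * cnj (Q $$ (a,j)) * (cnj (P $$ (b,i)) * P $$ (b,j)))"
      by (simp only: cnj_sum sum_product, intro sum.cong refl) (simp add: mult_ac)
    also have "\<dots> = (\<Sum>i\<in>S. \<Sum>b<n. \<Sum>j\<in>S. Q $$ (a,i) * cnj (Q $$ (a,j)) * (cnj (P $$ (b,i)) * P $$ (b,j)))"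
      by (rule sum.swap)
    also have "\<dots> = (\<Sum>i\<in>S. \<Sum>j\<in>S. \<Sum>b<n. Q $$ (a,i) * cnj (Q $$ (a,j)) * (cnj (P $$ (b,i)) * P $$ (b,j)))"
      by (rule sum.cong[OF refl], rule sum.swap)
    also have "\<dots> = (\<Sum>i\<in>S. \<Sum>j\<in>S. Q $$ (a,i) * cnj (Q $$ (a,j)) * (\<Sum>b<n. cnj (P $$ (b,i)) * P $$ (b,j)))"
      by (simp only: sum_distrib_left)
    also have "\<dots> = (\<Sum>i\<in>S. \<Sum>j\<in>S. Q $$ (a,i) * cnj (Q $$ (a,j)) * (if i = j then 1 else 0))"
    proof (intro sum.cong refl)
      fix i j assume "i \<in> S" "j \<in> S"
      hence "i < N" "j < N" using S by auto
      thus "Q $$ (a,i) * cnj (Q $$ (a,j)) * (\<Sum>b<n. cnj (P $$ (b,i)) * P $$ (b,j)) =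
        Q $$ (a,i) * cnj (Q $$ (a,j)) * (if i = j then 1 else 0)" using orth by simp
    qed
    also have "\<dots> = (\<Sum>i\<in>S. Q $$ (a,i) * cnj (Q $$ (a,i)))"
      by (simp add: finS if_distrib[of "\<lambda>t. _ * t"] sum.delta cong: if_cong)
    also have "\<dots> = complex_of_real (\<Sum>i\<in>S. (cmod (Q $$ (a,i)))\<^sup>2)"
      by (simp only: of_real_sum complex_norm_square)
    finally show ?thesis using of_real_eq_iff by blast
  qed
  have "(frob_norm (osum m n Q P S))\<^sup>2 = (\<Sum>a<m. \<Sum>b<n. (cmod (osum m n Q P S $$ (a,b)))\<^sup>2)"
    unfolding frob_norm_def by (simp add: sum_nonneg)
  also have "\<dots> = (\<Sum>a<m. \<Sum>i\<in>S. (cmod (Q $$ (a,i)))\<^sup>2)"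
  proof (rule sum.cong[OF refl])
    fix a assume "a \<in> {..<m}"
    hence "(\<Sum>b<n. (cmod (osum m n Q P S $$ (a,b)))\<^sup>2) = (\<Sum>b<n. (cmod (\<Sum>i\<in>S. Q $$ (a,i) * cnj (P $$ (b,i))))\<^sup>2)"
      by (intro sum.cong refl) (simp add: osum_def)
    thus "(\<Sum>b<n. (cmod (osum m n Q P S $$ (a,b)))\<^sup>2) = (\<Sum>i\<in>S. (cmod (Q $$ (a,i)))\<^sup>2)"
      using row by simp
  qed
  also have "\<dots> = (\<Sum>i\<in>S. nsq (col Q i))"
    unfolding nsq_def
  proof (subst sum.swap, rule sum.cong[OF refl])
    fix i assume "i \<in> S"
    hence "i < N" using S by auto
    thus "(\<Sum>a<m. (cmod (Q $$ (a, i)))\<^sup>2) = (\<Sum>a<dim_vec (col Q i). (cmod (col Q i $ a))\<^sup>2)"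
      using Q by simp
  qed
  finally show ?thesis .
qed

lemma proots_linear_prod: "proots (\<Prod>a\<leftarrow>as. [:- a, 1:]) = mset (as :: complex list)"
proof (induct as)
  case Nil then show ?case by simp
next
  case (Cons a as)
  have nz: "(\<Prod>a\<leftarrow>as. [:- a, 1:]) \<noteq> (0 :: complex poly)"
    by (simp add: prod_list_zero_iff image_iff)
  have "proots (\<Prod>a\<leftarrow>a # as. [:- a, 1:]) = proots ([:- a, 1:] * (\<Prod>a\<leftarrow>as. [:- a, 1:]))"
    by (simp only: list.map prod_list.Cons)
  also have "\<dots> = proots [:- a, 1:] + proots (\<Prod>a\<leftarrow>as. [:- a, 1:])"
    by (rule proots_mult) (simp, rule nz)
  also have "\<dots> = {#a#} + mset as" unfolding Cons by simp
  finally show ?case by simp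
qed

lemma svd_decomp:
  assumes E: "(E :: complex mat) \<in> carrier_mat m n"
  shows "\<exists>P. P \<in> carrier_mat n n \<and> mat_adjoint P * P = 1\<^sub>m n \<and> P * mat_adjoint P = 1\<^sub>m n \<and>
     nuclear_norm E = (\<Sum>i<n. vnorm (col (E * P) i))"
proof -
  define H where "H = mat_adjoint E * E"
  have Hc: "H \<in> carrier_mat n n" unfolding H_def using E adj_carrier[OF E] by simp
  have Hh: "mat_adjoint H = H" unfolding H_def using adj_mult[OF adj_carrier[OF E] E] by simp
  obtain P B where Pc: "P \<in> carrier_mat n n" and Bc: "B \<in> carrier_mat n n"
    and PhP: "mat_adjoint P * P = 1\<^sub>m n" and PPh: "P * mat_adjoint P = 1\<^sub>m n"
    and diagB: "diagonal_mat B" and HPB: "H = P * B * mat_adjoint P"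
    using hermitian_diag[OF Hc Hh] by blast
  define Q where "Q = E * P"
  have Qc: "Q \<in> carrier_mat m n" unfolding Q_def using E Pc by simp
  have Phc: "mat_adjoint P \<in> carrier_mat n n" using adj_carrier[OF Pc] .
  have sim: "similar_mat H B" unfolding similar_mat_def
    by (rule exI[of _ P], rule exI[of _ "mat_adjoint P"])
      (use Hc Bc Pc Phc PhP PPh HPB in \<open>auto simp: similar_mat_wit_def Let_def\<close>)
  have ut: "upper_triangular B" using diagB Bc unfolding diagonal_mat_def upper_triangular_def by auto
  have cp: "char_poly H = (\<Prod>a\<leftarrow>diag_mat B. [:- a, 1:])"
    using char_poly_similar[OF sim] char_poly_upper_triangular[OF Bc ut] by simp
  have "B = mat_adjoint P * H * P"
  proof -
    have "mat_adjoint P * H * P = (mat_adjoint P * P) * B * (mat_adjoint P * P)"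
      unfolding HPB by (rule assoc5[OF Phc Pc Bc Phc Pc])
    thus ?thesis using PhP Bc by simp
  qed
  also have "\<dots> = mat_adjoint Q * Q"
  proof -
    have "mat_adjoint P * H * P = mat_adjoint P * (mat_adjoint E * E) * P" unfolding H_def ..
    also have "\<dots> = (mat_adjoint P * mat_adjoint E) * (E * P)"
    proof -
      have "mat_adjoint P * (mat_adjoint E * E) = (mat_adjoint P * mat_adjoint E) * E"
        by (rule assoc_mult_mat[symmetric, OF Phc adj_carrier[OF E] E])
      moreover have "(mat_adjoint P * mat_adjoint E) * E * P = (mat_adjoint P * mat_adjoint E) * (E * P)"
        by (rule assoc_mult_mat[OF mult_carrier_mat[OF Phc adj_carrier[OF E]] E Pc])
      ultimately show ?thesis by simp
    qed
    also have "\<dots> = mat_adjoint Q * Q" unfolding Q_def using adj_mult[OF E Pc] by simp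
    finally show ?thesis .
  qed
  finally have BQ: "B = mat_adjoint Q * Q" .
  have Bii: "B $$ (i,i) = complex_of_real (nsq (col Q i))" if i: "i < n" for i
  proof -
    have "B $$ (i,i) = (\<Sum>a<m. cnj (Q $$ (a,i)) * Q $$ (a,i))"
      unfolding BQ using Qc i by (simp add: scalar_prod_def lessThan_atLeast0)
    also have "\<dots> = col Q i \<bullet>c col Q i"
      using Qc i by (simp add: scalar_prod_def lessThan_atLeast0 mult.commute)
    finally show ?thesis using cscalar_self by simp
  qed
  have "nuclear_norm E = sum_mset (image_mset (\<lambda>z. sqrt (Re z)) (mset (diag_mat B)))"
    unfolding nuclear_norm_def singular_values_def H_def[symmetric] cp proots_linear_prod ..
  also have "\<dots> = sum_list (map (\<lambda>i. sqrt (Re (B $$ (i,i)))) [0..<n])"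
    unfolding diag_mat_def mset_map[symmetric] sum_mset_sum_list map_map o_def
    using Bc by simp
  also have "\<dots> = (\<Sum>i<n. sqrt (Re (B $$ (i,i))))"
    unfolding sum_set_upt_conv_sum_list_nat[symmetric] by (simp add: atLeast0LessThan)
  also have "\<dots> = (\<Sum>i<n. vnorm (col Q i))"
    by (intro sum.cong refl) (simp add: Bii vnorm_def nsq_def)
  finally show ?thesis using Pc PhP PPh unfolding Q_def by blast
qed

lemma div_bounds: assumes "(r::nat) > 0" shows "(t div r) * r \<le> t" "t < (t div r + 1) * r"
proof -
  show "(t div r) * r \<le> t" by (rule div_times_less_eq_dividend)
  have e: "t = r * (t div r) + t mod r" by simp
  have m: "t mod r < r" using assms by simp
  have "(t div r + 1) * r = r * (t div r) + r" by (simp add: algebra_simps)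
  thus "t < (t div r + 1) * r" using e m by linarith
qed

lemma block_ineq:
  fixes \<tau> :: "nat \<Rightarrow> real" and r N :: nat
  assumes r: "r \<ge> 1" and nonneg: "\<And>t. \<tau> t \<ge> 0"
    and anti: "\<And>s t. s \<le> t \<Longrightarrow> t < N \<Longrightarrow> \<tau> t \<le> \<tau> s"
  defines "T \<equiv> \<lambda>j. {t \<in> {..<N}. t div r = j}"
  shows "(\<Sum>j<N. sqrt (\<Sum>t\<in>T j. (\<tau> t)\<^sup>2)) \<le> sqrt (\<Sum>t<N. (\<tau> t)\<^sup>2) + (\<Sum>t<N. \<tau> t) / sqrt r"
proof (cases N)
  case 0
  then show ?thesis by simp
next
  case (Suc M)
  define U where "U j = (\<Sum>t\<in>T j. \<tau> t)" for j
  have r0: "r > 0" using r by simp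
  have finT: "finite (T j)" for j unfolding T_def by simp
  have U0: "U j \<ge> 0" for j unfolding U_def by (intro sum_nonneg nonneg)
  have Tsub: "T j \<subseteq> {j * r..<(j+1)*r}" for j
  proof
    fix t assume "t \<in> T j"
    hence "t div r = j" unfolding T_def by simp
    thus "t \<in> {j * r..<(j+1)*r}" using div_bounds[OF r0, of t] by auto
  qed
  have cardT: "card (T j) \<le> r" for j
    using card_mono[OF _ Tsub[of j]] by simp
  have step: "sqrt (\<Sum>t\<in>T (Suc j). (\<tau> t)\<^sup>2) \<le> U j / sqrt r" for j
  proof (cases "T (Suc j) = {}")
    case True
    then show ?thesis using U0[of j] by simp
  next
    case False
    then obtain s0 where s0: "s0 \<in> T (Suc j)" by blast
    hence s0N: "s0 < N" and s0d: "s0 div r = Suc j" unfolding T_def by auto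
    have "Suc j * r \<le> s0" using div_bounds(1)[OF r0, of s0] s0d by simp
    hence sub: "{j * r..<Suc j * r} \<subseteq> T j"
      unfolding T_def using s0N by (auto intro!: div_nat_eqI simp: mult.commute)
    have cardr: "r \<le> card (T j)" using card_mono[OF finT sub] by simp
    have bound: "\<tau> s \<le> U j / r" if s: "s \<in> T (Suc j)" for s
    proof -
      have sN: "s < N" and sd: "s div r = Suc j" using s unfolding T_def by auto
      have "Suc j * r \<le> s" using div_bounds(1)[OF r0, of s] sd by simp
      have le: "\<tau> s \<le> \<tau> t" if "t \<in> T j" for t
      proof -
        have "t div r = j" using that unfolding T_def by simp
        hence "t < Suc j * r" using div_bounds(2)[OF r0, of t] by simp
        thus ?thesis using anti[of t s] sN \<open>Suc j * r \<le> s\<close> by simp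
      qed
      have "real r * \<tau> s \<le> real (card (T j)) * \<tau> s"
        using cardr nonneg[of s] by (intro mult_right_mono) auto
      also have "\<dots> = (\<Sum>t\<in>T j. \<tau> s)" by simp
      also have "\<dots> \<le> U j" unfolding U_def by (rule sum_mono) (rule le)
      finally show ?thesis using r0 by (simp add: field_simps)
    qed
    have "(\<Sum>t\<in>T (Suc j). (\<tau> t)\<^sup>2) \<le> (\<Sum>t\<in>T (Suc j). (U j / r)\<^sup>2)"
      by (intro sum_mono power_mono bound nonneg)
    also have "\<dots> = real (card (T (Suc j))) * (U j / r)\<^sup>2" by simp
    also have "\<dots> \<le> real r * (U j / r)\<^sup>2"
      using cardT[of "Suc j"] by (intro mult_right_mono) auto
    also have "\<dots> = (U j / sqrt r)\<^sup>2" using r0 by (simp add: power_divide power2_eq_square)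
    finally have "sqrt (\<Sum>t\<in>T (Suc j). (\<tau> t)\<^sup>2) \<le> sqrt ((U j / sqrt r)\<^sup>2)"
      by (rule real_sqrt_le_mono)
    also have "\<dots> = U j / sqrt r" using U0[of j] by simp
    finally show ?thesis .
  qed
  have first: "sqrt (\<Sum>t\<in>T 0. (\<tau> t)\<^sup>2) \<le> sqrt (\<Sum>t<N. (\<tau> t)\<^sup>2)"
    unfolding T_def by (intro real_sqrt_le_mono sum_mono2) auto
  have group: "(\<Sum>j<N. U j) = (\<Sum>t<N. \<tau> t)"
    unfolding U_def T_def
    by (rule sum.group) (auto intro: le_less_trans[OF div_le_dividend])
  have "(\<Sum>j<N. sqrt (\<Sum>t\<in>T j. (\<tau> t)\<^sup>2)) = sqrt (\<Sum>t\<in>T 0. (\<tau> t)\<^sup>2) + (\<Sum>j<M. sqrt (\<Sum>t\<in>T (Suc j). (\<tau> t)\<^sup>2))"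
    unfolding Suc by (rule sum.lessThan_Suc_shift)
  also have "\<dots> \<le> sqrt (\<Sum>t<N. (\<tau> t)\<^sup>2) + (\<Sum>j<M. U j / sqrt r)"
    by (intro add_mono first sum_mono step)
  also have "(\<Sum>j<M. U j / sqrt r) \<le> (\<Sum>j<N. U j / sqrt r)"
    unfolding Suc using U0 by (intro sum_mono2) auto
  also have "\<dots> = (\<Sum>t<N. \<tau> t) / sqrt r" by (simp add: sum_divide_distrib[symmetric] group)
  finally show ?thesis by simp
qed

lemma sort_perm: fixes N :: nat and f :: "nat \<Rightarrow> real" shows "\<exists>\<pi>. bij_betw \<pi> {..<N} {..<N} \<and> (\<forall>s t. s \<le> t \<longrightarrow> t < N \<longrightarrow> (f (\<pi> t)::real) \<le> f (\<pi> s))"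
proof -
  define xs where "xs = sort_key (\<lambda>i. - f i) [0..<N]"
  have len: "length xs = N" unfolding xs_def by simp
  have dist: "distinct xs" unfolding xs_def by (simp add: distinct_sort)
  have set: "set xs = {..<N}" unfolding xs_def by (simp add: atLeast0LessThan)
  have sorted: "sorted (map (\<lambda>i. - f i) xs)" unfolding xs_def by (rule sorted_sort_key)
  have bij: "bij_betw ((!) xs) {..<N} {..<N}"
    by (rule bij_betw_nth[OF dist]) (simp_all add: len set)
  have "f (xs ! t) \<le> f (xs ! s)" if "s \<le> t" "t < N" for s t
    using sorted_nth_mono[OF sorted that(1)] that len by simp
  thus ?thesis using bij by blast
qed

lemma card_block: assumes "(r::nat) \<ge> 1" shows "card {t \<in> {..<N}. t div r = j} \<le> r"
proof -
  have "{t \<in> {..<N}. t div r = j} \<subseteq> {j * r..<(j+1)*r}"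
    using div_bounds[of r] assms by fastforce
  from card_mono[OF _ this] show ?thesis by simp
qed

theorem lemma5:
  fixes m n p r :: nat and A :: "complex mat \<Rightarrow> complex vec"
    and X0 X0r :: "complex mat" and \<nu> b :: "complex vec"
  assumes "r \<ge> 1"
    and "clinear_op m n p A"
    and "rip_const m n A (4 * r) \<le> 0.04"
    and "X0 \<in> carrier_mat m n"
    and "\<nu> \<in> carrier_vec p"
    and "b = A X0 + \<nu>"
    and "best_rank_approx m n r X0 X0r"
  shows "\<exists>\<nu>' \<in> carrier_vec p. b = A X0r + \<nu>' \<and>
           vnorm \<nu>' \<le> 1.02 * (frob_norm (X0 - X0r) + nuclear_norm (X0 - X0r) / sqrt (real r))
                     + vnorm \<nu>"
proof -
  note r = assms(1) and lin = assms(2) and X0 = assms(4) and nu = assms(5) and b = assms(6)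
  have X0r: "X0r \<in> carrier_mat m n" using assms(7) unfolding best_rank_approx_def by blast
  define E where "E = X0 - X0r"
  have Ec: "E \<in> carrier_mat m n" unfolding E_def by (rule minus_carrier_mat[OF X0r])
  have AEc: "A E \<in> carrier_vec p" using lin Ec unfolding clinear_op_def by blast
  have AX0rc: "A X0r \<in> carrier_vec p" using lin X0r unfolding clinear_op_def by blast
  have X0eq: "X0 = X0r + E" unfolding E_def by (rule eq_matI) (use X0 X0r in auto)
  have "A X0 = A X0r + A E" unfolding X0eq using lin X0r Ec unfolding clinear_op_def by blast
  hence beq: "b = A X0r + (A E + \<nu>)" using b AEc AX0rc nu by simp
  have rip: "\<And>X. X \<in> carrier_mat m n \<Longrightarrow> mrank X \<le> 4 * r \<Longrightarrow> vnorm (A X) \<le> 1.02 * frob_norm X"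
    using rip_get[OF lin assms(3)] by blast
  obtain P where Pc: "P \<in> carrier_mat n n" and PhP: "mat_adjoint P * P = 1\<^sub>m n"
    and PPh: "P * mat_adjoint P = 1\<^sub>m n" and nuc: "nuclear_norm E = (\<Sum>i<n. vnorm (col (E * P) i))"
    using svd_decomp[OF Ec] by blast
  define Q where "Q = E * P"
  have Qc: "Q \<in> carrier_mat m n" unfolding Q_def using Ec Pc by simp
  define \<sigma> where "\<sigma> i = vnorm (col Q i)" for i
  obtain \<pi> where bij: "bij_betw \<pi> {..<n} {..<n}" and mono: "\<And>s t. s \<le> t \<Longrightarrow> t < n \<Longrightarrow> \<sigma> (\<pi> t) \<le> \<sigma> (\<pi> s)"
    using sort_perm[of n \<sigma>] by blast
  have inj: "inj_on \<pi> {..<n}" using bij bij_betw_def by blast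
  define T where "T j = {t \<in> {..<n}. t div r = j}" for j
  define S where "S j = \<pi> ` T j" for j
  have Tsub: "T j \<subseteq> {..<n}" for j unfolding T_def by auto
  have TU: "(\<Union>j\<in>{..<n}. T j) = {..<n}"
  proof (rule antisym)
    show "(\<Union>j\<in>{..<n}. T j) \<subseteq> {..<n}" using Tsub by blast
    show "{..<n} \<subseteq> (\<Union>j\<in>{..<n}. T j)"
    proof
      fix t assume t: "t \<in> {..<n}"
      hence "t div r < n" by (meson lessThan_iff div_le_dividend le_less_trans)
      moreover have "t \<in> T (t div r)" using t unfolding T_def by simp
      ultimately show "t \<in> (\<Union>j\<in>{..<n}. T j)" by blast
    qed
  qed
  have pim: "\<pi> ` {..<n} = {..<n}" using bij by (simp add: bij_betw_def)
  have SU: "(\<Union>j\<in>{..<n}. S j) = {..<n}"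
  proof -
    have "(\<Union>j\<in>{..<n}. S j) = \<pi> ` (\<Union>j\<in>{..<n}. T j)" unfolding S_def by (rule image_UN[symmetric])
    thus ?thesis unfolding TU pim .
  qed
  have Ssub: "S j \<subseteq> {..<n}" for j unfolding S_def using Tsub pim by blast
  have finS: "finite (S j)" for j by (rule finite_subset[OF Ssub]) simp
  have disjS: "S j \<inter> S k = {}" if "j \<noteq> k" for j k
  proof -
    have "T j \<inter> T k = {}" unfolding T_def using that by auto
    thus ?thesis unfolding S_def by (metis inj_on_image_Int[OF inj Tsub Tsub] image_empty)
  qed
  have Eeq: "E = osum m n Q P {..<n}" unfolding Q_def by (rule osum_self[OF Ec Pc PPh])
  also have "\<dots> = osum m n Q P (\<Union>j\<in>{..<n}. S j)" by (simp only: SU)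
  also have "\<dots> = msum m n (\<lambda>j. osum m n Q P (S j)) {..<n}"
    by (rule osum_union) (use finS disjS in auto)
  finally have Emsum: "E = msum m n (\<lambda>j. osum m n Q P (S j)) {..<n}" .
  have frobS: "frob_norm (osum m n Q P (S j)) = sqrt (\<Sum>t\<in>T j. (\<sigma> (\<pi> t))\<^sup>2)" for j
  proof -
    have "(frob_norm (osum m n Q P (S j)))\<^sup>2 = (\<Sum>i\<in>S j. nsq (col Q i))"
      by (rule osum_frob[OF Qc Pc PhP Ssub])
    also have "\<dots> = (\<Sum>t\<in>T j. nsq (col Q (\<pi> t)))"
      unfolding S_def by (rule sum.reindex[unfolded o_def]) (rule inj_on_subset[OF inj Tsub])
    also have "\<dots> = (\<Sum>t\<in>T j. (\<sigma> (\<pi> t))\<^sup>2)"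
      unfolding \<sigma>_def vnorm_def nsq_def by (simp add: sum_nonneg)
    finally show ?thesis using frob_nonneg by (metis real_sqrt_unique)
  qed
  have rkS: "mrank (osum m n Q P (S j)) \<le> 4 * r" for j
  proof -
    have "mrank (osum m n Q P (S j)) \<le> card (S j)" by (rule osum_rank[OF finS])
    also have "\<dots> \<le> card (T j)" unfolding S_def by (rule card_image_le) (simp add: T_def)
    also have "\<dots> \<le> r" unfolding T_def by (rule card_block[OF r])
    finally show ?thesis by simp
  qed
  have "vnorm (A E) \<le> (\<Sum>j<n. vnorm (A (osum m n Q P (S j))))"
    unfolding Emsum by (rule clinear_msum_bound[OF lin]) auto
  also have "\<dots> \<le> (\<Sum>j<n. 1.02 * sqrt (\<Sum>t\<in>T j. (\<sigma> (\<pi> t))\<^sup>2))"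
  proof (rule sum_mono)
    fix j assume "j \<in> {..<n}"
    show "vnorm (A (osum m n Q P (S j))) \<le> 1.02 * sqrt (\<Sum>t\<in>T j. (\<sigma> (\<pi> t))\<^sup>2)"
      using rip[OF osum_carrier rkS[of j]] unfolding frobS .
  qed
  also have "\<dots> = 1.02 * (\<Sum>j<n. sqrt (\<Sum>t\<in>T j. (\<sigma> (\<pi> t))\<^sup>2))" by (simp add: sum_distrib_left)
  also have "(\<Sum>j<n. sqrt (\<Sum>t\<in>T j. (\<sigma> (\<pi> t))\<^sup>2)) \<le>
      sqrt (\<Sum>t<n. (\<sigma> (\<pi> t))\<^sup>2) + (\<Sum>t<n. \<sigma> (\<pi> t)) / sqrt r"
    unfolding T_def by (rule block_ineq[OF r]) (auto simp: \<sigma>_def vnorm_nonneg intro: mono[unfolded \<sigma>_def])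
  also have "(\<Sum>t<n. (\<sigma> (\<pi> t))\<^sup>2) = (\<Sum>i<n. (\<sigma> i)\<^sup>2)"
    using sum.reindex_bij_betw[OF bij, of "\<lambda>i. (\<sigma> i)\<^sup>2"] by simp
  also have "(\<Sum>t<n. \<sigma> (\<pi> t)) = (\<Sum>i<n. \<sigma> i)"
    using sum.reindex_bij_betw[OF bij, of \<sigma>] by simp
  also have "(\<Sum>i<n. \<sigma> i) = nuclear_norm E" unfolding nuc \<sigma>_def Q_def ..
  also have "sqrt (\<Sum>i<n. (\<sigma> i)\<^sup>2) = frob_norm E"
  proof -
    have "(frob_norm E)\<^sup>2 = (frob_norm (osum m n Q P {..<n}))\<^sup>2" using Eeq by simp
    also have "\<dots> = (\<Sum>i<n. nsq (col Q i))" by (rule osum_frob[OF Qc Pc PhP]) simp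
    also have "\<dots> = (\<Sum>i<n. (\<sigma> i)\<^sup>2)"
      unfolding \<sigma>_def vnorm_def nsq_def by (simp add: sum_nonneg)
    finally show ?thesis using frob_nonneg by (metis real_sqrt_unique)
  qed
  finally have AE: "vnorm (A E) \<le> 1.02 * (frob_norm E + nuclear_norm E / sqrt r)" by simp
  show ?thesis
  proof (intro bexI[of _ "A E + \<nu>"] conjI)
    show "b = A X0r + (A E + \<nu>)" by (rule beq)
    show "A E + \<nu> \<in> carrier_vec p" using AEc nu by simp
    have "vnorm (A E + \<nu>) \<le> vnorm (A E) + vnorm \<nu>" by (rule vnorm_triangle[OF AEc nu])
    thus "vnorm (A E + \<nu>) \<le> 1.02 * (frob_norm (X0 - X0r) + nuclear_norm (X0 - X0r) / sqrt (real r)) + vnorm \<nu>"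
      using AE unfolding E_def[symmetric] by linarith
  qed
qed

end
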